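(* Let $G$ be a simple graph with $m$ edges and $W$ wedges, let $\mathcal{S}$ be a fixed subset of the wedges of $G$, let $\mathcal{R}=(r_1,\dots,r_s)$ be $s$ independent uniformly random edges of $G$, and let $X$ be the number of index pairs $i<j$ with $\{r_i,r_j\}\in\mathcal{S}$. If $W\ge m$ and $s\ge m/\sqrt{W}$, then $\mathrm{Var}[X] \le 18\, s^3 W^{3/2}/m^3$.
   Context: A wedge is a path of length 2 in $G$, i.e. an unordered pair of distinct edges sharing exactly one vertex; $W$ denotes the total number of wedges of $G$. *)

theory Defs
  imports "HOL-Probability.Probability"
begin

definition simple_graph_edges :: "'a set set \<Rightarrow> bool" where
  "simple_graph_edges E \<longleftrightarrow> finite E \<and> (\<forall>e\<in>E. card e = 2)"

definition wedges :: "'a set set \<Rightarrow> 'a set set set" where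
  "wedges E = {{e, f} | e f. e \<in> E \<and> f \<in> E \<and> e \<noteq> f \<and> card (e \<inter> f) = 1}"

definition wedge_pair_count :: "'a set set set \<Rightarrow> nat \<Rightarrow> (nat \<Rightarrow> 'a set) \<Rightarrow> nat" where
  "wedge_pair_count S s r = card {(i, j). i < j \<and> j < s \<and> {r i, r j} \<in> S}"

definition random_edges :: "'a set set \<Rightarrow> nat \<Rightarrow> (nat \<Rightarrow> 'a set) pmf" where
  "random_edges E s = Pi_pmf {..<s} undefined (\<lambda>_. pmf_of_set E)"

end

theory Submission
  imports Defs
begin
lemma Pi_pmf_split_coord:
  assumes "finite A" "i \<in> A" "\<And>f y. g (f(i:=y)) = g f"
  shows "map_pmf (\<lambda>r. (r i, g r)) (Pi_pmf A d p) = pair_pmf (p i) (map_pmf g (Pi_pmf (A - {i}) d p))"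
proof -
  have "A = insert i (A - {i})" using assms by auto
  hence "Pi_pmf A d p = map_pmf (\<lambda>(y,f). f(i:=y)) (pair_pmf (p i) (Pi_pmf (A-{i}) d p))"
    using assms Pi_pmf_insert[of "A - {i}" i d p] by auto
  hence "map_pmf (\<lambda>r. (r i, g r)) (Pi_pmf A d p) = map_pmf (\<lambda>(y,f). (y, g f)) (pair_pmf (p i) (Pi_pmf (A-{i}) d p))"
    by (simp add: pmf.map_comp o_def case_prod_unfold assms(3))
  also have "\<dots> = pair_pmf (p i) (map_pmf g (Pi_pmf (A - {i}) d p))"
    by (simp add: pair_map_pmf2 apsnd_def map_prod_def)
  finally show ?thesis .
qed

lemma pair_pmf_of_set:
  assumes "finite A" "A \<noteq> {}" "finite B" "B \<noteq> {}"
  shows "pair_pmf (pmf_of_set A) (pmf_of_set B) = pmf_of_set (A \<times> B)"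
proof (rule pmf_eqI)
  fix x :: "'a \<times> 'b"
  obtain a b where x: "x = (a,b)" by fastforce
  show "pmf (pair_pmf (pmf_of_set A) (pmf_of_set B)) x = pmf (pmf_of_set (A \<times> B)) x"
    using assms by (simp add: x pmf_pair card_cartesian_product indicator_def)
qed

context
  fixes E :: "'a set set"
  assumes fin: "finite E" and ne: "E \<noteq> {}"
begin

lemma comp1:
  assumes "finite A" "i \<in> A"
  shows "map_pmf (\<lambda>r. r i) (Pi_pmf A d (\<lambda>_. pmf_of_set E)) = pmf_of_set E"
  using assms by (simp add: Pi_pmf_component)

lemma comp2:
  assumes "finite A" "i \<in> A" "j \<in> A" "i \<noteq> j"
  shows "map_pmf (\<lambda>r. (r i, r j)) (Pi_pmf A d (\<lambda>_. pmf_of_set E)) = pmf_of_set (E \<times> E)"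
proof -
  have "map_pmf (\<lambda>r. (r i, r j)) (Pi_pmf A d (\<lambda>_. pmf_of_set E))
     = pair_pmf (pmf_of_set E) (map_pmf (\<lambda>r. r j) (Pi_pmf (A - {i}) d (\<lambda>_. pmf_of_set E)))"
    using assms by (intro Pi_pmf_split_coord) auto
  also have "map_pmf (\<lambda>r. r j) (Pi_pmf (A - {i}) d (\<lambda>_. pmf_of_set E)) = pmf_of_set E"
    using assms by (intro comp1) auto
  finally show ?thesis using fin ne by (simp add: pair_pmf_of_set)
qed

lemma comp3:
  assumes "finite A" "i \<in> A" "j \<in> A" "k \<in> A" "i \<noteq> j" "i \<noteq> k" "j \<noteq> k"
  shows "map_pmf (\<lambda>r. (r i, r j, r k)) (Pi_pmf A d (\<lambda>_. pmf_of_set E)) = pmf_of_set (E \<times> E \<times> E)"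
proof -
  have "map_pmf (\<lambda>r. (r i, r j, r k)) (Pi_pmf A d (\<lambda>_. pmf_of_set E))
     = pair_pmf (pmf_of_set E) (map_pmf (\<lambda>r. (r j, r k)) (Pi_pmf (A - {i}) d (\<lambda>_. pmf_of_set E)))"
    using assms by (intro Pi_pmf_split_coord) auto
  also have "map_pmf (\<lambda>r. (r j, r k)) (Pi_pmf (A - {i}) d (\<lambda>_. pmf_of_set E)) = pmf_of_set (E \<times> E)"
    using assms by (intro comp2) auto
  finally show ?thesis using fin ne by (simp add: pair_pmf_of_set)
qed

lemma comp4:
  assumes "finite A" "i \<in> A" "j \<in> A" "k \<in> A" "l \<in> A" "i \<noteq> j" "i \<noteq> k" "j \<noteq> k"
    "i \<noteq> l" "j \<noteq> l" "k \<noteq> l"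
  shows "map_pmf (\<lambda>r. (r i, r j, r k, r l)) (Pi_pmf A d (\<lambda>_. pmf_of_set E)) = pmf_of_set (E \<times> E \<times> E \<times> E)"
proof -
  have "map_pmf (\<lambda>r. (r i, r j, r k, r l)) (Pi_pmf A d (\<lambda>_. pmf_of_set E))
     = pair_pmf (pmf_of_set E) (map_pmf (\<lambda>r. (r j, r k, r l)) (Pi_pmf (A - {i}) d (\<lambda>_. pmf_of_set E)))"
    using assms by (intro Pi_pmf_split_coord) auto
  also have "map_pmf (\<lambda>r. (r j, r k, r l)) (Pi_pmf (A - {i}) d (\<lambda>_. pmf_of_set E)) = pmf_of_set (E \<times> E \<times> E)"
    using assms by (intro comp3) auto
  finally show ?thesis using fin ne by (simp add: pair_pmf_of_set)
qed

end

lemma wedges_finite: "finite E \<Longrightarrow> finite (wedges E)"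
  by (rule finite_subset[of _ "Pow E"]) (auto simp: wedges_def)

lemma star_bound:
  assumes "simple_graph_edges E" "u \<in> \<Union>E \<or> True"
  shows "card {b\<in>E. u \<in> b} * (card {b\<in>E. u \<in> b} - 1) \<le> 2 * card (wedges E)"
proof -
  let ?X = "{b\<in>E. u \<in> b}"
  have finE: "finite E" and c2: "\<And>e. e \<in> E \<Longrightarrow> card e = 2" using assms by (auto simp: simple_graph_edges_def)
  have finX: "finite ?X" using finE by auto
  have sub: "{B. B \<subseteq> ?X \<and> card B = 2} \<subseteq> wedges E"
  proof
    fix B assume "B \<in> {B. B \<subseteq> ?X \<and> card B = 2}"
    then obtain e f where B: "B = {e,f}" "e \<noteq> f" "e \<in> ?X" "f \<in> ?X"
      by (auto simp: card_2_iff)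
    have ce: "card e = 2" "card f = 2" using B c2 by auto
    have fe: "finite e" "finite f" using ce by (auto intro: card_ge_0_finite)
    have "u \<in> e \<inter> f" using B by auto
    hence ge: "card (e \<inter> f) \<ge> 1" using fe by (metis One_nat_def Suc_leI card_gt_0_iff empty_iff finite_Int)
    have "card (e \<inter> f) \<noteq> 2"
    proof
      assume h: "card (e \<inter> f) = 2"
      have "e \<inter> f = e" using card_subset_eq[of e "e \<inter> f"] fe ce h by auto
      moreover have "e \<inter> f = f" using card_subset_eq[of f "e \<inter> f"] fe ce h by auto
      ultimately show False using B by auto
    qed
    moreover have "card (e \<inter> f) \<le> 2" using card_mono[of e "e \<inter> f"] fe ce by auto
    ultimately have "card (e \<inter> f) = 1" using ge by linarith
    thus "B \<in> wedges E" using B unfolding wedges_def by blast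
  qed
  have "card ?X choose 2 \<le> card (wedges E)"
    using card_mono[OF wedges_finite[OF finE] sub] n_subsets[OF finX, of 2] by simp
  moreover have "even (card ?X * (card ?X - 1))" by (cases "even (card ?X)") auto
  ultimately show ?thesis unfolding choose_two by (metis dvd_mult_div_cancel mult_le_mono2)
qed

lemma nat_sq_bound:
  assumes "n * (n - 1) \<le> (2::nat) * w"
  shows "real (n - 1) ^ 2 \<le> 2 * real w"
proof -
  have "(n - 1) * (n - 1) \<le> n * (n - 1)" by simp
  hence "(n - 1) * (n - 1) \<le> 2 * w" using assms by linarith
  hence "real ((n - 1) * (n - 1)) \<le> real (2 * w)" by linarith
  thus ?thesis by (simp add: power2_eq_square)
qed

lemma sq_sum_le: "((x::real) + y)^2 \<le> 2 * x^2 + 2 * y^2"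
proof -
  have "(x + y)^2 = 2 * x^2 + 2 * y^2 - (x - y)^2" by (simp add: power2_eq_square algebra_simps)
  moreover have "(x - y)^2 \<ge> 0" by simp
  ultimately show ?thesis by linarith
qed

lemma deg_bound:
  assumes G: "simple_graph_edges E" and a: "a \<in> E" and S: "S \<subseteq> wedges E"
  shows "real (card {b\<in>E. {a,b} \<in> S}) ^ 2 \<le> 8 * real (card (wedges E))"
proof -
  have finE: "finite E" and c2: "\<And>e. e \<in> E \<Longrightarrow> card e = 2" using G by (auto simp: simple_graph_edges_def)
  obtain u v where uv: "a = {u,v}" "u \<noteq> v" using c2[OF a] by (auto simp: card_2_iff)
  let ?X = "{b\<in>E. u \<in> b}" and ?Y = "{b\<in>E. v \<in> b}"
  have sub: "{b\<in>E. {a,b} \<in> S} \<subseteq> (?X - {a}) \<union> (?Y - {a})"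
  proof
    fix b assume b: "b \<in> {b\<in>E. {a,b} \<in> S}"
    have "{a,b} \<in> wedges E" using b S by auto
    hence "\<exists>e f. {a,b} = {e,f} \<and> e \<in> E \<and> f \<in> E \<and> e \<noteq> f \<and> card (e \<inter> f) = 1"
      unfolding wedges_def by (simp only: mem_Collect_eq)
    then obtain e f where ef: "{a,b} = {e,f}" "e \<noteq> f" "card (e \<inter> f) = 1"
      by (elim exE conjE)
    have "(a = e \<and> b = f) \<or> (a = f \<and> b = e)" using ef(1) by (simp add: doubleton_eq_iff)
    hence ab: "a \<noteq> b \<and> card (a \<inter> b) = 1" using ef(2,3) by (metis Int_commute)
    from ab[THEN conjunct2] obtain w where "a \<inter> b = {w}" by (rule card_1_singletonE)
    hence "w \<in> a" "w \<in> b" by auto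
    thus "b \<in> (?X - {a}) \<union> (?Y - {a})" using b uv ab by auto
  qed
  have finXY: "finite ?X" "finite ?Y" using finE by auto
  have "card {b\<in>E. {a,b} \<in> S} \<le> card ((?X - {a}) \<union> (?Y - {a}))"
    using sub finXY by (intro card_mono) auto
  also have "\<dots> \<le> card (?X - {a}) + card (?Y - {a})" by (rule card_Un_le)
  also have "card (?X - {a}) = card ?X - 1" using a uv finXY by (intro card_Diff_singleton) auto
  also have "card (?Y - {a}) = card ?Y - 1" using a uv finXY by (intro card_Diff_singleton) auto
  finally have d: "real (card {b\<in>E. {a,b} \<in> S}) \<le> real (card ?X - 1) + real (card ?Y - 1)" by linarith
  have x: "real (card ?X - 1) ^ 2 \<le> 2 * real (card (wedges E))"
    by (rule nat_sq_bound, rule star_bound[OF G]) auto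
  have y: "real (card ?Y - 1) ^ 2 \<le> 2 * real (card (wedges E))"
    by (rule nat_sq_bound, rule star_bound[OF G]) auto
  have "real (card {b\<in>E. {a,b} \<in> S}) ^ 2 \<le> (real (card ?X - 1) + real (card ?Y - 1)) ^ 2"
    using d by (intro power_mono) auto
  also have "\<dots> \<le> 2 * real (card ?X - 1) ^ 2 + 2 * real (card ?Y - 1) ^ 2"
    by (rule sq_sum_le)
  finally show ?thesis using x y by linarith
qed

definition phi :: "'a set set set \<Rightarrow> 'a set \<Rightarrow> 'a set \<Rightarrow> real" where
  "phi S a b = (if {a,b} \<in> S then 1 else 0)"

lemma phi_sym: "phi S a b = phi S b a" unfolding phi_def by (metis insert_commute)
lemma phi_sq: "phi S a b * phi S a b = phi S a b" by (simp add: phi_def)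
lemma phi_nonneg: "phi S a b \<ge> 0" by (simp add: phi_def)

lemma sum_phi: "finite E \<Longrightarrow> (\<Sum>b\<in>E. phi S a b) = real (card {b\<in>E. {a,b} \<in> S})"
  by (simp add: phi_def sum.inter_filter[symmetric])

lemma fiber_card:
  assumes "w \<in> wedges E"
  shows "card {(x,y). {x,y} = w} \<le> 2 \<and> finite {(x,y). {x,y} = w}"
proof -
  have "\<exists>e f. w = {e,f} \<and> e \<in> E \<and> f \<in> E \<and> e \<noteq> f \<and> card (e \<inter> f) = 1"
    using assms unfolding wedges_def by (simp only: mem_Collect_eq)
  then obtain e f where w: "w = {e,f}" by (elim exE conjE)
  have sub: "{(x,y). {x,y} = w} \<subseteq> {(e,f),(f,e)}"
  proof (rule subsetI)
    fix z assume "z \<in> {(x,y). {x,y} = w}"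
    then obtain x y where z: "z = (x,y)" "{x,y} = {e,f}" using w by blast
    hence "(x=e \<and> y=f) \<or> (x=f \<and> y=e)" by (simp only: doubleton_eq_iff)
    thus "z \<in> {(e,f),(f,e)}" using z by blast
  qed
  hence "card {(x,y). {x,y} = w} \<le> card {(e,f),(f,e)}" by (intro card_mono) simp_all
  also have "\<dots> \<le> 2" by (rule card_insert_le_m1) simp_all
  finally show ?thesis using finite_subset[OF sub] by simp
qed

lemma sum_deg:
  assumes fin: "finite E" and S: "S \<subseteq> wedges E"
  shows "(\<Sum>a\<in>E. real (card {b\<in>E. {a,b} \<in> S})) \<le> 2 * real (card (wedges E))"
proof -
  have finS: "finite S" using S wedges_finite[OF fin] finite_subset by blast
  have "(\<Sum>a\<in>E. card {b\<in>E. {a,b} \<in> S}) = card (SIGMA a:E. {b\<in>E. {a,b} \<in> S})"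
    using fin by (intro card_SigmaI[symmetric]) auto
  also have "\<dots> \<le> card (\<Union>w\<in>S. {(x,y). {x,y} = w})"
  proof (rule card_mono)
    show "finite (\<Union>w\<in>S. {(x,y). {x,y} = w})"
      using finS fiber_card S by (intro finite_UN_I) auto
    show "(SIGMA a:E. {b\<in>E. {a,b} \<in> S}) \<subseteq> (\<Union>w\<in>S. {(x,y). {x,y} = w})" by auto
  qed
  also have "\<dots> \<le> (\<Sum>w\<in>S. card {(x,y). {x,y} = w})" by (rule card_UN_le[OF finS])
  also have "\<dots> \<le> (\<Sum>w\<in>S. 2)" using S fiber_card by (intro sum_mono) blast
  also have "\<dots> = 2 * card S" by simp
  also have "\<dots> \<le> 2 * card (wedges E)" using S wedges_finite[OF fin] by (simp add: card_mono)
  finally have "(\<Sum>a\<in>E. card {b\<in>E. {a,b} \<in> S}) \<le> 2 * card (wedges E)" .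
  hence "real (\<Sum>a\<in>E. card {b\<in>E. {a,b} \<in> S}) \<le> real (2 * card (wedges E))" by linarith
  thus ?thesis by simp
qed

context
  fixes E :: "'a set set" and s :: nat and S :: "'a set set set"
  assumes fin: "finite E" and ne: "E \<noteq> {}"
begin

abbreviation "RR \<equiv> Pi_pmf {..<s} undefined (\<lambda>_. pmf_of_set E)"

lemma exp2:
  assumes "i < s" "j < s" "i \<noteq> j"
  shows "measure_pmf.expectation RR (\<lambda>r. g (r i) (r j)) = (\<Sum>a\<in>E. \<Sum>b\<in>E. g a b) / real (card E) ^ 2"
proof -
  have "measure_pmf.expectation RR (\<lambda>r. g (r i) (r j))
      = measure_pmf.expectation (map_pmf (\<lambda>r. (r i, r j)) RR) (\<lambda>(a,b). g a b)" by simp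
  also have "map_pmf (\<lambda>r. (r i, r j)) RR = pmf_of_set (E \<times> E)"
    using assms by (intro comp2 fin ne) auto
  also have "measure_pmf.expectation (pmf_of_set (E \<times> E)) (\<lambda>(a,b). g a b)
      = (\<Sum>x\<in>E \<times> E. (\<lambda>(a,b). g a b) x) / real (card (E \<times> E))"
    using fin ne by (intro integral_pmf_of_set) auto
  finally show ?thesis by (simp add: sum.cartesian_product card_cartesian_product power2_eq_square)
qed

lemma exp3:
  assumes "i < s" "j < s" "k < s" "i \<noteq> j" "i \<noteq> k" "j \<noteq> k"
  shows "measure_pmf.expectation RR (\<lambda>r. g (r i) (r j) (r k)) = (\<Sum>a\<in>E. \<Sum>b\<in>E. \<Sum>c\<in>E. g a b c) / real (card E) ^ 3"
proof -
  have "measure_pmf.expectation RR (\<lambda>r. g (r i) (r j) (r k))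
      = measure_pmf.expectation (map_pmf (\<lambda>r. (r i, r j, r k)) RR) (\<lambda>(a,b,c). g a b c)" by simp
  also have "map_pmf (\<lambda>r. (r i, r j, r k)) RR = pmf_of_set (E \<times> E \<times> E)"
    using assms by (intro comp3 fin ne) auto
  also have "measure_pmf.expectation (pmf_of_set (E \<times> E \<times> E)) (\<lambda>(a,b,c). g a b c)
      = (\<Sum>x\<in>E \<times> E \<times> E. (\<lambda>(a,b,c). g a b c) x) / real (card (E \<times> E \<times> E))"
    using fin ne by (intro integral_pmf_of_set) auto
  finally show ?thesis by (simp add: sum.cartesian_product card_cartesian_product power3_eq_cube)
qed

lemma exp4:
  assumes "i < s" "j < s" "k < s" "l < s" "i \<noteq> j" "i \<noteq> k" "j \<noteq> k" "i \<noteq> l" "j \<noteq> l" "k \<noteq> l"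
  shows "measure_pmf.expectation RR (\<lambda>r. g (r i) (r j) (r k) (r l)) = (\<Sum>a\<in>E. \<Sum>b\<in>E. \<Sum>c\<in>E. \<Sum>d\<in>E. g a b c d) / real (card E) ^ 4"
proof -
  have "measure_pmf.expectation RR (\<lambda>r. g (r i) (r j) (r k) (r l))
      = measure_pmf.expectation (map_pmf (\<lambda>r. (r i, r j, r k, r l)) RR) (\<lambda>(a,b,c,d). g a b c d)" by simp
  also have "map_pmf (\<lambda>r. (r i, r j, r k, r l)) RR = pmf_of_set (E \<times> E \<times> E \<times> E)"
    using assms by (intro comp4 fin ne) auto
  also have "measure_pmf.expectation (pmf_of_set (E \<times> E \<times> E \<times> E)) (\<lambda>(a,b,c,d). g a b c d)
      = (\<Sum>x\<in>E \<times> E \<times> E \<times> E. (\<lambda>(a,b,c,d). g a b c d) x) / real (card (E \<times> E \<times> E \<times> E))"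
    using fin ne by (intro integral_pmf_of_set) auto
  finally show ?thesis by (simp add: sum.cartesian_product card_cartesian_product power4_eq_xxxx)
qed

end

lemma var_sum:
  fixes Y :: "'i \<Rightarrow> 'b \<Rightarrow> real"
  assumes finM: "finite (set_pmf M)" and finP: "finite P"
  shows "measure_pmf.variance M (\<lambda>r. \<Sum>p\<in>P. Y p r) =
    (\<Sum>p\<in>P. \<Sum>q\<in>P. measure_pmf.expectation M (\<lambda>r. Y p r * Y q r)
       - measure_pmf.expectation M (Y p) * measure_pmf.expectation M (Y q))"
proof -
  have int: "\<And>f::'b \<Rightarrow> real. integrable (measure_pmf M) f" using finM by (rule integrable_measure_pmf_finite)
  have e1: "measure_pmf.expectation M (\<lambda>r. \<Sum>p\<in>P. Y p r) = (\<Sum>p\<in>P. measure_pmf.expectation M (Y p))"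
    by (simp add: Bochner_Integration.integral_sum int)
  have "measure_pmf.variance M (\<lambda>r. \<Sum>p\<in>P. Y p r) =
      measure_pmf.expectation M (\<lambda>r. (\<Sum>p\<in>P. Y p r)^2) - (measure_pmf.expectation M (\<lambda>r. \<Sum>p\<in>P. Y p r))^2"
    by (rule measure_pmf.variance_eq) (rule int)+
  also have "(\<lambda>r. (\<Sum>p\<in>P. Y p r)^2) = (\<lambda>r. \<Sum>p\<in>P. \<Sum>q\<in>P. Y p r * Y q r)"
    by (simp add: power2_eq_square sum_product)
  also have "measure_pmf.expectation M (\<lambda>r. \<Sum>p\<in>P. \<Sum>q\<in>P. Y p r * Y q r)
      = (\<Sum>p\<in>P. \<Sum>q\<in>P. measure_pmf.expectation M (\<lambda>r. Y p r * Y q r))"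
    by (simp add: Bochner_Integration.integral_sum int)
  also have "(measure_pmf.expectation M (\<lambda>r. \<Sum>p\<in>P. Y p r))^2 =
      (\<Sum>p\<in>P. \<Sum>q\<in>P. measure_pmf.expectation M (Y p) * measure_pmf.expectation M (Y q))"
    using e1 by (simp add: power2_eq_square sum_product)
  finally show ?thesis by (simp add: sum_subtractf)
qed

definition PP :: "nat \<Rightarrow> (nat \<times> nat) set" where "PP s = {(i,j). i < j \<and> j < s}"
definition ZZ :: "nat \<Rightarrow> ((nat \<times> nat) \<times> (nat \<times> nat)) set" where
  "ZZ s = {(p,q). p \<in> PP s \<and> q \<in> PP s \<and> p \<noteq> q \<and> {fst p, snd p} \<inter> {fst q, snd q} \<noteq> {}}"

lemma PP_sub: "PP s \<subseteq> {..<s} \<times> {..<s}" by (auto simp: PP_def)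
lemma finite_PP: "finite (PP s)" by (rule finite_subset[OF PP_sub]) auto
lemma card_PP: "card (PP s) \<le> s^2"
proof -
  have "card (PP s) \<le> card ({..<s} \<times> {..<s})" by (rule card_mono[OF _ PP_sub]) auto
  thus ?thesis by (simp add: card_cartesian_product power2_eq_square)
qed

lemma card_ZZ: "card (ZZ s) \<le> s^3"
proof -
  define g where "g = (\<lambda>(x::nat,y::nat,z::nat). ((min x y, max x y), (min x z, max x z)))"
  have sub: "ZZ s \<subseteq> g ` ({..<s} \<times> {..<s} \<times> {..<s})"
  proof
    fix pq assume pZ: "pq \<in> ZZ s"
    obtain i j k l where pqd: "pq = ((i,j),(k,l))" by (metis prod.exhaust)
    have pq: "pq = ((i,j),(k,l))" "i < j" "j < s" "k < l" "l < s" "(i,j) \<noteq> (k,l)"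
      "{i,j} \<inter> {k,l} \<noteq> {}"
      using pZ pqd unfolding ZZ_def PP_def by simp_all
    from pq(7) have "i = k \<or> i = l \<or> j = k \<or> j = l" by auto
    moreover have "i = k \<Longrightarrow> pq = g (i,j,l)" using pq by (auto simp: g_def)
    moreover have "i = l \<Longrightarrow> pq = g (i,j,k)" using pq by (auto simp: g_def)
    moreover have "j = k \<Longrightarrow> pq = g (j,i,l)" using pq by (auto simp: g_def)
    moreover have "j = l \<Longrightarrow> pq = g (j,i,k)" using pq by (auto simp: g_def)
    ultimately show "pq \<in> g ` ({..<s} \<times> {..<s} \<times> {..<s})" using pq by (metis (no_types, lifting) lessThan_iff less_trans mem_Sigma_iff rev_image_eqI)
  qed
  have "card (ZZ s) \<le> card (g ` ({..<s} \<times> {..<s} \<times> {..<s}))" by (rule card_mono[OF _ sub]) auto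
  also have "\<dots> \<le> card ({..<s} \<times> {..<s} \<times> {..<s})" by (rule card_image_le) auto
  finally show ?thesis by (simp add: card_cartesian_product power3_eq_cube)
qed

lemma finite_ZZ: "finite (ZZ s)"
  by (rule finite_subset[of _ "PP s \<times> PP s"]) (auto simp: ZZ_def finite_PP)

theorem mainTheorem3:
  fixes E :: "'a set set" and S :: "'a set set set" and s :: nat
  assumes "simple_graph_edges E"
    and "E \<noteq> {}"
    and "S \<subseteq> wedges E"
    and "card (wedges E) \<ge> card E"
    and "real s \<ge> real (card E) / sqrt (real (card (wedges E)))"
  shows "measure_pmf.variance (random_edges E s) (\<lambda>r. real (wedge_pair_count S s r))
           \<le> 18 * real s ^ 3 * real (card (wedges E)) powr (3/2) / real (card E) ^ 3"
proof -
  have finE: "finite E" using assms(1) by (simp add: simple_graph_edges_def)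
  have ne: "E \<noteq> {}" by (rule assms(2))
  define m where "m = real (card E)"
  define W where "W = real (card (wedges E))"
  have m_pos: "m > 0" using finE ne by (simp add: m_def card_gt_0_iff)
  have W_ge: "W \<ge> m" using assms(4) by (simp add: W_def m_def)
  have W_pos: "W > 0" using m_pos W_ge by linarith
  define R where "R = Pi_pmf {..<s} undefined (\<lambda>_. pmf_of_set E)"
  have R_eq: "random_edges E s = R" by (simp add: R_def random_edges_def)
  define Y where "Y = (\<lambda>(p::nat\<times>nat) (r::nat \<Rightarrow> 'a set). phi S (r (fst p)) (r (snd p)))"
  define P where "P = PP s"
  have finP: "finite P" by (simp add: P_def finite_PP)
  have X_eq: "(\<lambda>r. real (wedge_pair_count S s r)) = (\<lambda>r. \<Sum>p\<in>P. Y p r)"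
  proof
    fix r :: "nat \<Rightarrow> 'a set"
    have "{(i, j). i < j \<and> j < s \<and> {r i, r j} \<in> S} = {p\<in>P. {r (fst p), r (snd p)} \<in> S}"
      by (auto simp: P_def PP_def)
    hence "real (wedge_pair_count S s r) = real (card {p\<in>P. {r (fst p), r (snd p)} \<in> S})"
      by (simp add: wedge_pair_count_def)
    also have "\<dots> = (\<Sum>p\<in>P. Y p r)"
      using finP by (simp add: Y_def phi_def sum.inter_filter[symmetric])
    finally show "real (wedge_pair_count S s r) = (\<Sum>p\<in>P. Y p r)" .
  qed
  have finR: "finite (set_pmf R)"
    unfolding R_def using finE ne by (subst set_Pi_pmf) (auto intro!: finite_PiE_dflt)
  define c where "c = (\<lambda>p q. measure_pmf.expectation R (\<lambda>r. Y p r * Y q r)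
       - measure_pmf.expectation R (Y p) * measure_pmf.expectation R (Y q))"
  have var: "measure_pmf.variance R (\<lambda>r. \<Sum>p\<in>P. Y p r) = (\<Sum>p\<in>P. \<Sum>q\<in>P. c p q)"
    unfolding c_def by (rule var_sum[OF finR finP])
  define d where "d = (\<lambda>a. real (card {b\<in>E. {a,b} \<in> S}))"
  have d_nonneg: "\<And>a. d a \<ge> 0" by (simp add: d_def)
  have sum_d: "(\<Sum>a\<in>E. d a) \<le> 2 * W"
    unfolding d_def W_def by (rule sum_deg[OF finE assms(3)])
  have d_le: "d a \<le> 3 * sqrt W" if "a \<in> E" for a
  proof -
    have "d a ^ 2 \<le> 8 * W" unfolding d_def W_def by (rule deg_bound[OF assms(1) that assms(3)])
    also have "\<dots> \<le> (3 * sqrt W)^2" using W_pos by (simp add: power_mult_distrib)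
    finally show ?thesis by (rule power2_le_imp_le) (use W_pos in simp)
  qed
  define \<alpha> where "\<alpha> = 2 * W / m^2"
  define T where "T = 6 * W * sqrt W / m^3"
  have EY: "measure_pmf.expectation R (Y p) = (\<Sum>a\<in>E. d a) / m^2" if pP: "p \<in> P" for p
  proof -
    obtain i j where p: "p = (i,j)" "i < j" "j < s" using pP by (auto simp: P_def PP_def)
    have "measure_pmf.expectation R (Y p) = measure_pmf.expectation R (\<lambda>r. phi S (r i) (r j))"
      by (simp add: Y_def p)
    also have "\<dots> = (\<Sum>a\<in>E. \<Sum>b\<in>E. phi S a b) / real (card E) ^ 2"
      unfolding R_def using p by (intro exp2 finE ne) auto
    finally show ?thesis by (simp add: sum_phi[OF finE] d_def m_def)
  qed
  have EY_nonneg: "measure_pmf.expectation R (Y p) \<ge> 0" for p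
    by (intro Bochner_Integration.integral_nonneg) (simp add: Y_def phi_nonneg)
  have EY_le: "measure_pmf.expectation R (Y p) \<le> \<alpha>" if "p \<in> P" for p
    using EY[OF that] sum_d m_pos by (simp add: \<alpha>_def divide_right_mono)
  have key3: "measure_pmf.expectation R (\<lambda>r. phi S (r a) (r b) * phi S (r a) (r c')) \<le> T"
    if "a < s" "b < s" "c' < s" "a \<noteq> b" "a \<noteq> c'" "b \<noteq> c'" for a b c'
  proof -
    have "measure_pmf.expectation R (\<lambda>r. phi S (r a) (r b) * phi S (r a) (r c'))
        = (\<Sum>x\<in>E. \<Sum>y\<in>E. \<Sum>z\<in>E. phi S x y * phi S x z) / real (card E) ^ 3"
      unfolding R_def using that by (intro exp3[where g = "\<lambda>x y z. phi S x y * phi S x z"] finE ne) auto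
    also have "(\<Sum>x\<in>E. \<Sum>y\<in>E. \<Sum>z\<in>E. phi S x y * phi S x z) = (\<Sum>x\<in>E. d x * d x)"
      by (simp add: sum_product[symmetric] sum_phi[OF finE] d_def)
    also have "(\<Sum>x\<in>E. d x * d x) \<le> (\<Sum>x\<in>E. d x * (3 * sqrt W))"
      using d_le d_nonneg by (intro sum_mono mult_left_mono) auto
    also have "\<dots> = 3 * sqrt W * (\<Sum>x\<in>E. d x)" by (simp add: sum_distrib_right mult.commute)
    also have "\<dots> \<le> 3 * sqrt W * (2 * W)" using sum_d W_pos by (intro mult_left_mono) auto
    finally show ?thesis using m_pos by (simp add: T_def m_def divide_right_mono mult.commute mult.left_commute)
  qed

  have EY2: "measure_pmf.expectation R (\<lambda>r. phi S (r i) (r j)) = (\<Sum>a\<in>E. \<Sum>b\<in>E. phi S a b) / real (card E) ^ 2"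
    if "i < s" "j < s" "i \<noteq> j" for i j
    unfolding R_def using that by (intro exp2 finE ne) auto
  have c_bd: "c p q \<le> (if p = q then \<alpha> else 0) + (if (p,q) \<in> ZZ s then T else 0)"
    if pP: "p \<in> P" and qP: "q \<in> P" for p q
  proof -
    obtain i j where p: "p = (i,j)" "i < j" "j < s" using pP by (auto simp: P_def PP_def)
    obtain k l where q: "q = (k,l)" "k < l" "l < s" using qP by (auto simp: P_def PP_def)
    have Eprod_nonneg: "measure_pmf.expectation R (Y p) * measure_pmf.expectation R (Y q) \<ge> 0"
      using EY_nonneg by simp
    show ?thesis
    proof (cases "p = q")
      case True
      have "(\<lambda>r. Y p r * Y q r) = Y p" by (rule ext) (simp add: True Y_def phi_sq)
      hence "c p q \<le> measure_pmf.expectation R (Y p)" using Eprod_nonneg by (simp add: c_def)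
      moreover have "(p,q) \<notin> ZZ s" by (simp add: ZZ_def True)
      ultimately show ?thesis using EY_le[OF pP] True by simp
    next
      case False
      show ?thesis
      proof (cases "(p,q) \<in> ZZ s")
        case True
        hence inter: "{i,j} \<inter> {k,l} \<noteq> {}" using p q by (simp add: ZZ_def)
        have "measure_pmf.expectation R (\<lambda>r. Y p r * Y q r) \<le> T"
        proof -
          from inter have "i = k \<or> i = l \<or> j = k \<or> j = l" by auto
          then show ?thesis
          proof (elim disjE)
            assume h: "i = k"
            have "(\<lambda>r. Y p r * Y q r) = (\<lambda>r. phi S (r i) (r j) * phi S (r i) (r l))"
              by (simp add: Y_def p q h)
            moreover have "j \<noteq> l" using False p q h by auto
            ultimately show ?thesis using key3[of i j l] p q h by simp
          next
            assume h: "i = l"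
            have "(\<lambda>r. Y p r * Y q r) = (\<lambda>r. phi S (r i) (r j) * phi S (r i) (r k))"
              by (rule ext) (metis Y_def p(1) q(1) h phi_sym fst_conv snd_conv case_prod_conv)
            thus ?thesis using key3[of i j k] p q h by simp
          next
            assume h: "j = k"
            have "(\<lambda>r. Y p r * Y q r) = (\<lambda>r. phi S (r j) (r i) * phi S (r j) (r l))"
              by (rule ext) (metis Y_def p(1) q(1) h phi_sym fst_conv snd_conv case_prod_conv)
            thus ?thesis using key3[of j i l] p q h by simp
          next
            assume h: "j = l"
            have "(\<lambda>r. Y p r * Y q r) = (\<lambda>r. phi S (r j) (r i) * phi S (r j) (r k))"
              by (rule ext) (metis Y_def p(1) q(1) h phi_sym fst_conv snd_conv case_prod_conv)
            moreover have "i \<noteq> k" using False p q h by auto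
            ultimately show ?thesis using key3[of j i k] p q h by simp
          qed
        qed
        thus ?thesis using Eprod_nonneg True False by (simp add: c_def)
      next
        case False2: False
        have disj: "{i,j} \<inter> {k,l} = {}" using False2 False pP qP p q by (auto simp: ZZ_def P_def)
        hence dist: "i \<noteq> k" "i \<noteq> l" "j \<noteq> k" "j \<noteq> l" by auto
        have "measure_pmf.expectation R (\<lambda>r. Y p r * Y q r)
            = measure_pmf.expectation R (\<lambda>r. phi S (r i) (r j) * phi S (r k) (r l))"
          by (simp add: Y_def p q)
        also have "\<dots> = (\<Sum>a\<in>E. \<Sum>b\<in>E. \<Sum>c\<in>E. \<Sum>d\<in>E. phi S a b * phi S c d) / real (card E) ^ 4"
          unfolding R_def using p q dist
          by (intro exp4[where g = "\<lambda>a b c d. phi S a b * phi S c d"] finE ne) auto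
        also have "(\<Sum>a\<in>E. \<Sum>b\<in>E. \<Sum>c\<in>E. \<Sum>d\<in>E. phi S a b * phi S c d)
            = (\<Sum>a\<in>E. \<Sum>b\<in>E. phi S a b * (\<Sum>c\<in>E. \<Sum>d\<in>E. phi S c d))"
          by (simp only: sum_distrib_left)
        also have "\<dots> = (\<Sum>a\<in>E. \<Sum>b\<in>E. phi S a b) * (\<Sum>c\<in>E. \<Sum>d\<in>E. phi S c d)"
          by (simp only: sum_distrib_right)
        also have "\<dots> / real (card E) ^ 4 = measure_pmf.expectation R (Y p) * measure_pmf.expectation R (Y q)"
          using EY2[of i j] EY2[of k l] p q by (simp add: Y_def power4_eq_xxxx power2_eq_square)
        finally show ?thesis using False False2 by (simp add: c_def)
      qed
    qed
  qed
  have sumB: "(\<Sum>p\<in>P. \<Sum>q\<in>P. (if p = q then \<alpha> else 0) + (if (p,q) \<in> ZZ s then T else 0))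
      = real (card P) * \<alpha> + real (card (ZZ s)) * T"
  proof -
    have "(\<Sum>p\<in>P. \<Sum>q\<in>P. (if p = q then \<alpha> else 0) + (if (p,q) \<in> ZZ s then T else 0))
        = (\<Sum>p\<in>P. \<Sum>q\<in>P. (if p = q then \<alpha> else 0)) + (\<Sum>p\<in>P. \<Sum>q\<in>P. (if (p,q) \<in> ZZ s then T else 0))"
      by (simp add: sum.distrib)
    also have "(\<Sum>p\<in>P. \<Sum>q\<in>P. (if p = q then \<alpha> else 0)) = real (card P) * \<alpha>"
      using finP by simp
    also have "(\<Sum>p\<in>P. \<Sum>q\<in>P. (if (p,q) \<in> ZZ s then T else 0)) = (\<Sum>x\<in>P \<times> P. if x \<in> ZZ s then T else 0)"
      by (simp add: sum.cartesian_product)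
    also have "\<dots> = (\<Sum>x\<in>{x\<in>P \<times> P. x \<in> ZZ s}. T)"
      using finP by (simp only: sum.inter_filter finite_cartesian_product)
    also have "{x\<in>P \<times> P. x \<in> ZZ s} = ZZ s" by (auto simp: ZZ_def P_def)
    finally show ?thesis by simp
  qed
  have alpha_nn: "\<alpha> \<ge> 0" using W_pos m_pos by (simp add: \<alpha>_def)
  have T_nn: "T \<ge> 0" using W_pos m_pos by (simp add: T_def)
  have cP: "real (card P) \<le> real s ^ 2"
    using card_PP[of s] unfolding P_def by (metis of_nat_le_iff of_nat_power)
  have cZ: "real (card (ZZ s)) \<le> real s ^ 3"
    using card_ZZ[of s] by (metis of_nat_le_iff of_nat_power)
  have "measure_pmf.variance (random_edges E s) (\<lambda>r. real (wedge_pair_count S s r))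
      = (\<Sum>p\<in>P. \<Sum>q\<in>P. c p q)"
  proof -
    have Xp: "\<And>r. real (wedge_pair_count S s r) = (\<Sum>p\<in>P. Y p r)" using X_eq by meson
    show ?thesis by (simp only: R_eq Xp var)
  qed
  also have "\<dots> \<le> (\<Sum>p\<in>P. \<Sum>q\<in>P. (if p = q then \<alpha> else 0) + (if (p,q) \<in> ZZ s then T else 0))"
    by (intro sum_mono c_bd)
  also have "\<dots> = real (card P) * \<alpha> + real (card (ZZ s)) * T" by (rule sumB)
  also have "\<dots> \<le> real s ^ 2 * \<alpha> + real s ^ 3 * T"
    using cP cZ alpha_nn T_nn by (intro add_mono mult_right_mono) auto
  also have "\<dots> \<le> 18 * real s ^ 3 * W * sqrt W / m ^ 3"
  proof -
    have sW: "sqrt W > 0" using W_pos by simp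
    have ms: "m \<le> real s * sqrt W"
      using assms(5) sW by (simp add: m_def W_def divide_le_eq)
    have k: "2 * real s ^ 2 * W / m ^ 3 \<ge> 0" using W_pos m_pos by simp
    have "real s ^ 2 * \<alpha> = (2 * real s ^ 2 * W / m ^ 3) * m"
      using m_pos by (simp add: \<alpha>_def field_simps power2_eq_square power3_eq_cube)
    also have "\<dots> \<le> (2 * real s ^ 2 * W / m ^ 3) * (real s * sqrt W)"
      using mult_left_mono[OF ms k] .
    also have "\<dots> = 2 * real s ^ 3 * W * sqrt W / m ^ 3"
      by (simp add: field_simps power2_eq_square power3_eq_cube)
    finally have a1: "real s ^ 2 * \<alpha> \<le> 2 * real s ^ 3 * W * sqrt W / m ^ 3" .
    have a2: "real s ^ 3 * T = 6 * real s ^ 3 * W * sqrt W / m ^ 3" by (simp add: T_def)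
    have a3: "0 \<le> real s ^ 3 * W * sqrt W / m ^ 3" using W_pos m_pos by simp
    have "2 * real s ^ 3 * W * sqrt W / m ^ 3 + 6 * real s ^ 3 * W * sqrt W / m ^ 3
        = 8 * (real s ^ 3 * W * sqrt W / m ^ 3)" by (simp add: field_simps)
    also have "\<dots> \<le> 18 * (real s ^ 3 * W * sqrt W / m ^ 3)" using a3 by (intro mult_right_mono) auto
    also have "\<dots> = 18 * real s ^ 3 * W * sqrt W / m ^ 3" by simp
    finally show ?thesis using a1 a2 by linarith
  qed
  finally have fin: "measure_pmf.variance (random_edges E s) (\<lambda>r. real (wedge_pair_count S s r)) \<le> 18 * real s ^ 3 * W * sqrt W / m ^ 3" .
  have pw: "W * sqrt W = W powr (3/2)"
  proof -
    have "W powr (3/2) = W powr (1 + 1/2)" by simp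
    also have "\<dots> = W powr 1 * W powr (1/2)" by (rule powr_add)
    also have "\<dots> = W * sqrt W" using W_pos by (simp add: powr_half_sqrt)
    finally show ?thesis by simp
  qed
  have "18 * real s ^ 3 * W * sqrt W / m ^ 3 = 18 * real s ^ 3 * W powr (3/2) / m ^ 3"
    using pw by (simp add: mult.assoc)
  hence "measure_pmf.variance (random_edges E s) (\<lambda>r. real (wedge_pair_count S s r)) \<le> 18 * real s ^ 3 * W powr (3/2) / m ^ 3"
    using fin by linarith
  thus ?thesis unfolding W_def m_def .
qed

end
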